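(* Let $(M,d)$ be a metric space, $\mathsf{P}\subseteq M$ a set of $n$ points, and $1\le\ell\le k\le n$ integers with $\ell\mid k$; put $m=k/\ell$. Let $Q=\{q_1,\dots,q_m\}$ be the output of Gonzalez's algorithm on $\mathsf{P}$ with $m$ centers, and let $C\subseteq\mathsf{P}$ with $|C|=k$ and $C\supseteq\bigcup_{i=1}^m N_{\mathsf{P}}(q_i,\ell)$. Then $\max_{p\in\mathsf{P}} d_C(p,\ell)\le 3\,r_{\mathrm{opt}}$, where $r_{\mathrm{opt}}=\min_{C'\subseteq\mathsf{P},|C'|=k}\max_{p\in\mathsf{P}} d_{C'}(p,\ell)$.
   Context: Gonzalez's algorithm with $m$ centers: $q_1\in\mathsf{P}$ is arbitrary, and for $i=2,\dots,m$, $q_i$ is a point of $\mathsf{P}$ maximizing $d(p,\{q_1,\dots,q_{i-1}\})$ over $p\in\mathsf{P}$. For a finite $S\subseteq M$ and $1\le i\le|S|$, $d_S(p,i)$ is the radius of the smallest closed ball centered at $p$ containing at least $i$ points of $S$; nearest neighbors are ordered lexicographically by $(d(p,s),\text{index of }s)$ and $N_S(p,i)$ is the set of the first $i$ points of $S$ in this order, $|N_S(p,i)|=i$. *)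

theory Defs
  imports "HOL-Analysis.Analysis"
begin

definition dist_set :: "('a \<Rightarrow> 'a \<Rightarrow> real) \<Rightarrow> 'a \<Rightarrow> 'a set \<Rightarrow> real" where
  "dist_set d p A = Min ((d p) ` A)"

definition kdist :: "('a \<Rightarrow> 'a \<Rightarrow> real) \<Rightarrow> 'a set \<Rightarrow> 'a \<Rightarrow> nat \<Rightarrow> real" where
  "kdist d S p i = Inf {r::real. 0 \<le> r \<and> i \<le> card {s \<in> S. d p s \<le> r}}"

definition nn_less :: "('a \<Rightarrow> 'a \<Rightarrow> real) \<Rightarrow> ('a \<Rightarrow> nat) \<Rightarrow> 'a \<Rightarrow> 'a \<Rightarrow> 'a \<Rightarrow> bool" where
  "nn_less d idx p t s \<longleftrightarrow> d p t < d p s \<or> (d p t = d p s \<and> idx t < idx s)"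

text \<open>N_S(p,i): the first i points of S in this order.\<close>
definition knn :: "('a \<Rightarrow> 'a \<Rightarrow> real) \<Rightarrow> ('a \<Rightarrow> nat) \<Rightarrow> 'a set \<Rightarrow> 'a \<Rightarrow> nat \<Rightarrow> 'a set" where
  "knn d idx S p i = {s \<in> S. card {t \<in> S. nn_less d idx p t s} < i}"

text \<open>q_1,...,q_m is a possible output of Gonzalez's algorithm on P with m centers.\<close>
definition gonzalez :: "('a \<Rightarrow> 'a \<Rightarrow> real) \<Rightarrow> 'a set \<Rightarrow> nat \<Rightarrow> (nat \<Rightarrow> 'a) \<Rightarrow> bool" where
  "gonzalez d P m q \<longleftrightarrow> q 1 \<in> P \<and>
     (\<forall>i \<in> {2..m}. q i \<in> P \<and>
        (\<forall>p \<in> P. dist_set d p (q ` {1..<i}) \<le> dist_set d (q i) (q ` {1..<i})))"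

definition r_opt :: "('a \<Rightarrow> 'a \<Rightarrow> real) \<Rightarrow> 'a set \<Rightarrow> nat \<Rightarrow> nat \<Rightarrow> real" where
  "r_opt d P k l = Min {Max ((\<lambda>p. kdist d C' p l) ` P) | C'. C' \<subseteq> P \<and> card C' = k}"

end

theory Submission
  imports Defs
begin

lemma kdist_props:
  assumes fin: "finite S" and ic: "i \<le> card S" and nn: "\<And>s. 0 \<le> d p s"
  shows "0 \<le> kdist d S p i" "i \<le> card {s\<in>S. d p s \<le> kdist d S p i}"
proof -
  define A where "A = {r::real. 0 \<le> r \<and> i \<le> card {s \<in> S. d p s \<le> r}}"
  define W where "W = insert 0 (d p ` S)"
  have finW: "finite W" using fin W_def by auto
  have red: "Max {w\<in>W. w \<le> r} \<in> A \<inter> W \<and> Max {w\<in>W. w \<le> r} \<le> r" if "r \<in> A" for r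
  proof -
    let ?r' = "Max {w\<in>W. w \<le> r}"
    have ne: "{w\<in>W. w \<le> r} \<noteq> {}" using that unfolding A_def W_def by auto
    have fw: "finite {w\<in>W. w \<le> r}" using finW by auto
    have mem: "?r' \<in> {w\<in>W. w \<le> r}" using Max_in[OF fw ne] .
    have eq: "{s \<in> S. d p s \<le> ?r'} = {s \<in> S. d p s \<le> r}"
    proof
      show "{s \<in> S. d p s \<le> ?r'} \<subseteq> {s \<in> S. d p s \<le> r}" using mem by auto
      show "{s \<in> S. d p s \<le> r} \<subseteq> {s \<in> S. d p s \<le> ?r'}"
      proof
        fix s assume "s \<in> {s \<in> S. d p s \<le> r}"
        then have "d p s \<in> {w\<in>W. w \<le> r}" unfolding W_def by auto
        then show "s \<in> {s \<in> S. d p s \<le> ?r'}" using Max_ge[OF fw] \<open>s \<in> _\<close> by auto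
      qed
    qed
    have "0 \<le> ?r'" using Max_ge[OF fw, of 0] that unfolding A_def W_def by auto
    then show ?thesis using eq that mem unfolding A_def by auto
  qed
  have AW_fin: "finite (A \<inter> W)" using finW by auto
  have "Max (insert 0 (d p ` S)) \<in> A"
  proof -
    have "{s \<in> S. d p s \<le> Max (insert 0 (d p ` S))} = S" using fin by auto
    then show ?thesis using ic fin unfolding A_def by auto
  qed
  then have AW_ne: "A \<inter> W \<noteq> {}" using red by blast
  let ?z = "Min (A \<inter> W)"
  have zin: "?z \<in> A" using Min_in[OF AW_fin AW_ne] by auto
  have "Inf A = ?z"
  proof (rule cInf_eq_minimum[OF zin])
    fix x assume "x \<in> A"
    then show "?z \<le> x" using red[of x] Min_le[OF AW_fin] by fastforce
  qed
  then have "kdist d S p i = ?z" unfolding kdist_def A_def by simp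
  then show "0 \<le> kdist d S p i" "i \<le> card {s\<in>S. d p s \<le> kdist d S p i}"
    using zin unfolding A_def by auto
qed

lemma kdist_le:
  assumes "0 \<le> r" "i \<le> card {s \<in> S. d p s \<le> r}"
  shows "kdist d S p i \<le> r"
  unfolding kdist_def
  by (rule cInf_lower) (use assms in \<open>auto intro: bdd_belowI[of _ 0]\<close>)

lemma knn_card:
  assumes fin: "finite P" and inj: "inj_on idx P" and lc: "l \<le> card P"
  shows "card (knn d idx P x l) = l"
proof -
  define rk where "rk s = card {t\<in>P. nn_less d idx x t s}" for s
  have trans: "nn_less d idx x a c" if "nn_less d idx x a b" "nn_less d idx x b c" for a b c
    using that unfolding nn_less_def by auto
  have irr: "\<not> nn_less d idx x a a" for a unfolding nn_less_def by auto
  have tot: "nn_less d idx x a b \<or> nn_less d idx x b a" if "a \<in> P" "b \<in> P" "a \<noteq> b" for a b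
  proof -
    have "idx a \<noteq> idx b" using inj that by (auto dest: inj_onD)
    then show ?thesis unfolding nn_less_def
      by (cases "d x a < d x b"; cases "d x b < d x a"; auto)
  qed
  have mono: "rk a < rk b" if "a \<in> P" "b \<in> P" "nn_less d idx x a b" for a b
  proof -
    have "{t\<in>P. nn_less d idx x t a} \<subset> {t\<in>P. nn_less d idx x t b}"
      using that trans irr by blast
    then show ?thesis unfolding rk_def using fin by (auto intro: psubset_card_mono)
  qed
  have injr: "inj_on rk P"
  proof (rule inj_onI)
    fix a b assume "a \<in> P" "b \<in> P" "rk a = rk b"
    then show "a = b" using tot mono by (metis less_irrefl)
  qed
  have rng: "rk ` P \<subseteq> {..<card P}"
  proof
    fix y assume "y \<in> rk ` P"
    then obtain s where s: "s \<in> P" "y = rk s" by auto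
    have "{t\<in>P. nn_less d idx x t s} \<subset> P" using s irr by blast
    then show "y \<in> {..<card P}" using s fin unfolding rk_def by (auto intro: psubset_card_mono)
  qed
  have img: "rk ` P = {..<card P}"
    using card_subset_eq[OF _ rng] card_image[OF injr] by auto
  have "knn d idx P x l = {s\<in>P. rk s < l}" unfolding knn_def rk_def by simp
  moreover have "rk ` {s\<in>P. rk s < l} = {..<l}"
  proof
    show "rk ` {s\<in>P. rk s < l} \<subseteq> {..<l}" by auto
    show "{..<l} \<subseteq> rk ` {s\<in>P. rk s < l}"
    proof
      fix y assume y: "y \<in> {..<l}"
      then have "y \<in> rk ` P" using img lc by auto
      then obtain s where "s \<in> P" "y = rk s" by auto
      then show "y \<in> rk ` {s\<in>P. rk s < l}" using y by auto
    qed
  qed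
  moreover have "inj_on rk {s\<in>P. rk s < l}" using injr by (auto intro: inj_on_subset)
  ultimately show ?thesis using card_image[of rk "{s\<in>P. rk s < l}"] by simp
qed

lemma knn_close:
  assumes fin: "finite P" and lc: "l \<le> card P" and nn: "\<And>s. 0 \<le> d x s"
    and s: "s \<in> knn d idx P x l"
  shows "d x s \<le> kdist d P x l"
proof (rule ccontr)
  assume "\<not> ?thesis"
  then have "{t\<in>P. d x t \<le> kdist d P x l} \<subseteq> {t\<in>P. nn_less d idx x t s}"
    unfolding nn_less_def by auto
  then have "card {t\<in>P. d x t \<le> kdist d P x l} \<le> card {t\<in>P. nn_less d idx x t s}"
    using fin by (auto intro: card_mono)
  moreover have "card {t\<in>P. nn_less d idx x t s} < l" using s unfolding knn_def by auto
  ultimately show False using kdist_props(2)[of P l d x, OF fin lc nn] by linarith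
qed

lemma kdist_mono:
  assumes "finite T" "S \<subseteq> T" "finite S" "i \<le> card S" "\<And>s. 0 \<le> d p s"
  shows "kdist d T p i \<le> kdist d S p i"
proof (rule kdist_le)
  show "0 \<le> kdist d S p i" using kdist_props(1)[of S i d p, OF assms(3,4,5)] .
  have "card {s\<in>S. d p s \<le> kdist d S p i} \<le> card {s\<in>T. d p s \<le> kdist d S p i}"
    using assms by (auto intro: card_mono)
  then show "i \<le> card {s\<in>T. d p s \<le> kdist d S p i}" using kdist_props(2)[of S i d p, OF assms(3,4,5)] by linarith
qed


theorem mainTheorem11:
  fixes M :: "'a set" and d :: "'a \<Rightarrow> 'a \<Rightarrow> real" and P C :: "'a set"
    and idx :: "'a \<Rightarrow> nat" and k l m :: nat and q :: "nat \<Rightarrow> 'a"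
  assumes "Metric_space M d"
    and "finite P" and "P \<subseteq> M"
    and "inj_on idx P"
    and "1 \<le> l" and "l \<le> k" and "k \<le> card P" and "l dvd k"
    and "m = k div l"
    and "gonzalez d P m q"
    and "C \<subseteq> P" and "card C = k"
    and "(\<Union>i\<in>{1..m}. knn d idx P (q i) l) \<subseteq> C"
  shows "Max ((\<lambda>p. kdist d C p l) ` P) \<le> 3 * r_opt d P k l"
proof -
  interpret Metric_space M d by fact
  note fin = assms(2) and PM = assms(3)
  have kml: "k = m * l" using assms(8,9) by simp
  have m1: "1 \<le> m" using kml assms(5,6) by (cases m) auto
  define S where "S = {Max ((\<lambda>p. kdist d C' p l) ` P) | C'. C' \<subseteq> P \<and> card C' = k}"
  have finS: "finite S"
  proof -
    have "S \<subseteq> (\<lambda>C'. Max ((\<lambda>p. kdist d C' p l) ` P)) ` Pow P" unfolding S_def by auto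
    then show ?thesis using fin finite_subset by blast
  qed
  obtain T where "T \<subseteq> P" "card T = k" "finite T" by (rule obtain_subset_with_card_n[OF assms(7)])
  then have neS: "S \<noteq> {}" unfolding S_def by auto
  have "r_opt d P k l \<in> S" unfolding r_opt_def S_def[symmetric] using Min_in[OF finS neS] .
  then obtain D where D: "D \<subseteq> P" "card D = k" and rdef: "r_opt d P k l = Max ((\<lambda>p. kdist d D p l) ` P)"
    unfolding S_def by auto
  define r where "r = r_opt d P k l"
  have finD: "finite D" using D fin finite_subset by blast
  have lD: "l \<le> card D" using D assms(6) by simp
  have Dr: "kdist d D x l \<le> r" if "x \<in> P" for x
    unfolding r_def rdef using that fin by (auto intro: Max_ge)
  have Pne: "P \<noteq> {}" using assms(5,6,7) by auto
  obtain p0 where p0: "p0 \<in> P" using Pne by auto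
  have r0: "0 \<le> r" using Dr[OF p0] kdist_props(1)[of D l d p0, OF finD lD nonneg] by linarith
  have q1: "q 1 \<in> P" using assms(10) unfolding gonzalez_def by simp
  have gz: "\<forall>i \<in> {2..m}. q i \<in> P \<and>
        (\<forall>p \<in> P. dist_set d p (q ` {1..<i}) \<le> dist_set d (q i) (q ` {1..<i}))"
    using assms(10) unfolding gonzalez_def by simp
  have qP: "q i \<in> P" if "i \<in> {1..m}" for i
  proof (cases "i = 1")
    case True then show ?thesis using q1 by simp
  next
    case False then have "i \<in> {2..m}" using that by auto
    then show ?thesis using gz by blast
  qed
  show ?thesis unfolding r_def[symmetric]
  proof (rule Max.boundedI)
    show "finite ((\<lambda>p. kdist d C p l) ` P)" using fin by simp
    show "(\<lambda>p. kdist d C p l) ` P \<noteq> {}" using Pne by simp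
    fix y assume "y \<in> (\<lambda>p. kdist d C p l) ` P"
    then obtain p where p: "p \<in> P" and y: "y = kdist d C p l" by auto
    define \<delta> where "\<delta> = Min ((\<lambda>j. d p (q j)) ` {1..m})"
    have fI: "finite ((\<lambda>j. d p (q j)) ` {1..m})" by simp
    have nI: "(\<lambda>j. d p (q j)) ` {1..m} \<noteq> {}" using m1 by auto
    obtain i where i: "i \<in> {1..m}" "d p (q i) = \<delta>"
      using Min_in[OF fI nI] unfolding \<delta>_def by auto
    have dmin: "\<delta> \<le> d p (q j)" if "j \<in> {1..m}" for j
      unfolding \<delta>_def using that by (auto intro: Min_le)
    have sepq: "\<delta> \<le> d (q a) (q b)" if "1 \<le> b" "b < a" "a \<le> m" for a b
    proof -
      have a2: "a \<in> {2..m}" using that by auto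
      have g: "dist_set d p (q ` {1..<a}) \<le> dist_set d (q a) (q ` {1..<a})"
        using conjunct2[OF gz[rule_format, OF a2]] p by blast
      have fa: "finite ((d p) ` (q ` {1..<a}))" by simp
      have na: "(d p) ` (q ` {1..<a}) \<noteq> {}" using that by auto
      have "\<delta> \<le> dist_set d p (q ` {1..<a})"
        unfolding dist_set_def using Min_ge_iff[OF fa na] dmin that by auto
      also have "\<dots> \<le> dist_set d (q a) (q ` {1..<a})" by fact
      also have "\<dots> \<le> d (q a) (q b)" unfolding dist_set_def using that by (auto intro: Min_le)
      finally show ?thesis .
    qed
    have key: "\<delta> \<le> 2 * r"
    proof (rule ccontr)
      assume "\<not> \<delta> \<le> 2 * r"
      then have big: "2 * r < \<delta>" by simp
      define x where "x a = (if a = 0 then p else q a)" for a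
      have xP: "x a \<in> P" if "a \<in> {0..m}" for a using that qP p unfolding x_def by auto
      have sep: "2 * r < d (x a) (x b)" if "a \<in> {0..m}" "b \<in> {0..m}" "a \<noteq> b" for a b
      proof -
        have "\<delta> \<le> d (x a) (x b)"
        proof (cases "a = 0")
          case True then show ?thesis using that dmin unfolding x_def by auto
        next
          case False note a0 = this
          show ?thesis
          proof (cases "b = 0")
            case True then show ?thesis using that dmin a0 commute unfolding x_def by auto
          next
            case False
            show ?thesis
            proof (cases "b < a")
              case True then show ?thesis using a0 False that sepq[of b a] unfolding x_def by auto
            next
              case nb: False then have "a < b" using that by auto
              then have "\<delta> \<le> d (q b) (q a)" using a0 that sepq[of a b] by auto
              then show ?thesis using a0 False commute[of "q b" "q a"] unfolding x_def by auto
            qed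
          qed
        qed
        then show ?thesis using big by simp
      qed
      define B where "B a = {s\<in>D. d (x a) s \<le> r}" for a
      have cB: "l \<le> card (B a)" if "a \<in> {0..m}" for a
      proof -
        have sub: "{s\<in>D. d (x a) s \<le> kdist d D (x a) l} \<subseteq> B a"
          using Dr[OF xP[OF that]] unfolding B_def by auto
        have fB: "finite (B a)" using finD unfolding B_def by simp
        have "l \<le> card {s\<in>D. d (x a) s \<le> kdist d D (x a) l}"
          using kdist_props(2)[of D l d "x a", OF finD lD nonneg] .
        also have "\<dots> \<le> card (B a)" by (rule card_mono[OF fB sub])
        finally show ?thesis .
      qed
      have disj: "\<forall>a\<in>{0..m}. \<forall>b\<in>{0..m}. a \<noteq> b \<longrightarrow> B a \<inter> B b = {}"
      proof (intro ballI impI equals0I)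
        fix a b s assume ab: "a \<in> {0..m}" "b \<in> {0..m}" "a \<noteq> b" and s: "s \<in> B a \<inter> B b"
        have sM: "s \<in> M" using s D PM unfolding B_def by auto
        have "d (x a) (x b) \<le> d (x a) s + d s (x b)"
        proof -
          have "x a \<in> M" "x b \<in> M" using xP ab PM by auto
          then show ?thesis using triangle sM by blast
        qed
        also have "\<dots> \<le> 2 * r" using s commute unfolding B_def by auto
        finally show False using sep[OF ab] by simp
      qed
      have "card (\<Union>a\<in>{0..m}. B a) = (\<Sum>a\<in>{0..m}. card (B a))"
        by (rule card_UN_disjoint) (use disj finD in \<open>auto simp: B_def\<close>)
      also have "\<dots> \<ge> (\<Sum>a\<in>{0..m}. l)" by (rule sum_mono) (use cB in auto)
      finally have "(m + 1) * l \<le> card (\<Union>a\<in>{0..m}. B a)" by simp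
      also have "\<dots> \<le> card D" using finD by (intro card_mono) (auto simp: B_def)
      finally show False using D kml assms(5) by simp
    qed
    have "kdist d C p l \<le> \<delta> + r"
    proof (rule kdist_le)
      show "0 \<le> \<delta> + r" using r0 nonneg[of p "q i"] i(2) by linarith
      have sub: "knn d idx P (q i) l \<subseteq> {s\<in>C. d p s \<le> \<delta> + r}"
      proof
        fix s assume s: "s \<in> knn d idx P (q i) l"
        have sC: "s \<in> C" using s assms(13) i by blast
        have sP: "s \<in> P" using s unfolding knn_def by auto
        have pM: "p \<in> M" "s \<in> M" "q i \<in> M" using p sP qP[OF i(1)] PM by auto
        have "d p s \<le> d p (q i) + d (q i) s" using triangle[OF pM(1) pM(3) pM(2)] .
        also have "d (q i) s \<le> kdist d P (q i) l"
          using knn_close[OF fin _ _ s] assms(6,7) by simp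
        also have "kdist d P (q i) l \<le> kdist d D (q i) l"
          using kdist_mono[OF fin D(1) finD lD] by simp
        also have "\<dots> \<le> r" using Dr qP i by simp
        finally show "s \<in> {s\<in>C. d p s \<le> \<delta> + r}" using sC i by simp
      qed
      have "card (knn d idx P (q i) l) = l" using knn_card[OF fin assms(4)] assms(6,7) by simp
      moreover have "finite C" using assms(11) fin finite_subset by blast
      ultimately show "l \<le> card {s\<in>C. d p s \<le> \<delta> + r}" using card_mono[OF _ sub] by simp
    qed
    then show "y \<le> 3 * r" using y key by simp
  qed
qed

end
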